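(* Assume $f$ has a unique global maximizer $g$ and the problem contains no weak epistasis. Let $S\subseteq V$ and let $R$ be any assignment with $\mathcal C(R)=V\setminus\big(S\cup\mathcal{IN}(S)\cup\mathcal{IN}^2(S)\big)$. If $\big|\Psi_{\{(\mathcal{IN}(S)\setminus S,\,g)\}\cup R}[s]\big|=1$ for all $s\in S$, then $\psi_s=g[s]$ for all $s\in S$ and all $\psi\in\Psi_{\{(\mathcal{IN}(S)\setminus S,\,g)\}\cup R}$.
   Context: Fix $\ell\ge1$, loci $V=\{0,\dots,\ell-1\}$, chromosomes $\vec y\in\{0,1\}^V$, fitness $f:\{0,1\}^V\to\mathbb R$ (maximized) with unique global maximizer $g$. An assignment $A$ is a set of pairs $(v,a)$ ($v\in V$, $a\in\{0,1\}$) with at most one pair per locus; $A[v]=a$ if $(v,a)\in A$, else $A[v]=*$; coverage $\mathcal C(A)=\{v:A[v]\ne*\}$; for $T\subseteq V$, $\{(T,g)\}=\{(t,g[t]):t\in T\}$. $\Psi_A$ (constrained optima) is the set of chromosomes agreeing with $A$ on $\mathcal C(A)$ with maximum fitness among such chromosomes; $\Psi_A[v]=\{\psi_v:\psi\in\Psi_A\}$. Epistasis: for $v\in V$ and nonempty $S\subseteq V\setminus\{v\}$, $S\Rightarrow v$ iff for every $s\in S$ there exists an assignment $A$ with $\mathcal C(A)=S$ and $\Psi_A[v]\neq\Psi_{A\setminus\{(s,A[s])\}}[v]$; the empty set is never epistatic. An epistasis $S\Rightarrow v$ with $|S|\ge2$ is weak if no nonempty proper subset $T\subsetneq S$ has $T\Rightarrow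 v$; "no weak epistasis" means no epistasis is weak. $\mathcal{IN}(v)=\{u:\{u\}\Rightarrow v\}$, $\mathcal{IN}^2(v)=\{u:\exists w\in\mathcal{IN}(v),\ \{u\}\Rightarrow w\}$, and for $S\subseteq V$, $\mathcal{IN}(S)=\bigcup_{v\in S}\mathcal{IN}(v)$, $\mathcal{IN}^2(S)=\bigcup_{v\in S}\mathcal{IN}^2(v)$. *)

theory Defs
  imports Complex_Main
begin

text \<open>Loci V = {0..<l}. A chromosome is a function nat => bool that is False outside V
 (bool encodes {0,1}).\<close>

definition chroms :: "nat \<Rightarrow> (nat \<Rightarrow> bool) set" where
  "chroms l = {y. \<forall>v. l \<le> v \<longrightarrow> y v = False}"

definition is_assignment :: "nat \<Rightarrow> (nat \<times> bool) set \<Rightarrow> bool" where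
  "is_assignment l A \<longleftrightarrow> (\<forall>(v,a)\<in>A. v < l) \<and> (\<forall>v a b. (v,a) \<in> A \<longrightarrow> (v,b) \<in> A \<longrightarrow> a = b)"

definition cov :: "(nat \<times> bool) set \<Rightarrow> nat set" where
  "cov A = fst ` A"

definition agrees :: "(nat \<Rightarrow> bool) \<Rightarrow> (nat \<times> bool) set \<Rightarrow> bool" where
  "agrees y A \<longleftrightarrow> (\<forall>(v,a)\<in>A. y v = a)"

definition Psi :: "nat \<Rightarrow> ((nat \<Rightarrow> bool) \<Rightarrow> real) \<Rightarrow> (nat \<times> bool) set \<Rightarrow> (nat \<Rightarrow> bool) set" where
  "Psi l f A = {y \<in> chroms l. agrees y A \<and> (\<forall>z \<in> chroms l. agrees z A \<longrightarrow> f z \<le> f y)}"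

definition Psi_at :: "nat \<Rightarrow> ((nat \<Rightarrow> bool) \<Rightarrow> real) \<Rightarrow> (nat \<times> bool) set \<Rightarrow> nat \<Rightarrow> bool set" where
  "Psi_at l f A v = (\<lambda>y. y v) ` Psi l f A"

text \<open>Removing the pair (s, A[s]) from A: remove all pairs with locus s (at most one).\<close>
definition epistatic :: "nat \<Rightarrow> ((nat \<Rightarrow> bool) \<Rightarrow> real) \<Rightarrow> nat set \<Rightarrow> nat \<Rightarrow> bool" where
  "epistatic l f S v \<longleftrightarrow> v < l \<and> S \<noteq> {} \<and> S \<subseteq> {0..<l} - {v} \<and>
     (\<forall>s\<in>S. \<exists>A. is_assignment l A \<and> cov A = S \<and>
        Psi_at l f A v \<noteq> Psi_at l f (A - ({s} \<times> UNIV)) v)"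

definition weak_epistatic :: "nat \<Rightarrow> ((nat \<Rightarrow> bool) \<Rightarrow> real) \<Rightarrow> nat set \<Rightarrow> nat \<Rightarrow> bool" where
  "weak_epistatic l f S v \<longleftrightarrow> epistatic l f S v \<and> 2 \<le> card S \<and>
     \<not> (\<exists>T. T \<noteq> {} \<and> T \<subset> S \<and> epistatic l f T v)"

definition no_weak_epistasis :: "nat \<Rightarrow> ((nat \<Rightarrow> bool) \<Rightarrow> real) \<Rightarrow> bool" where
  "no_weak_epistasis l f \<longleftrightarrow> (\<forall>S v. \<not> weak_epistatic l f S v)"

definition IN1 :: "nat \<Rightarrow> ((nat \<Rightarrow> bool) \<Rightarrow> real) \<Rightarrow> nat \<Rightarrow> nat set" where
  "IN1 l f v = {u. epistatic l f {u} v}"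

definition IN2 :: "nat \<Rightarrow> ((nat \<Rightarrow> bool) \<Rightarrow> real) \<Rightarrow> nat \<Rightarrow> nat set" where
  "IN2 l f v = {u. \<exists>w \<in> IN1 l f v. epistatic l f {u} w}"

definition INs :: "nat \<Rightarrow> ((nat \<Rightarrow> bool) \<Rightarrow> real) \<Rightarrow> nat set \<Rightarrow> nat set" where
  "INs l f S = (\<Union>v\<in>S. IN1 l f v)"

definition IN2s :: "nat \<Rightarrow> ((nat \<Rightarrow> bool) \<Rightarrow> real) \<Rightarrow> nat set \<Rightarrow> nat set" where
  "IN2s l f S = (\<Union>v\<in>S. IN2 l f v)"

definition gassign :: "nat set \<Rightarrow> (nat \<Rightarrow> bool) \<Rightarrow> (nat \<times> bool) set" where
  "gassign T g = {(t, g t) | t. t \<in> T}"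

definition unique_global_max :: "nat \<Rightarrow> ((nat \<Rightarrow> bool) \<Rightarrow> real) \<Rightarrow> (nat \<Rightarrow> bool) \<Rightarrow> bool" where
  "unique_global_max l f g \<longleftrightarrow> g \<in> chroms l \<and> (\<forall>y \<in> chroms l. y \<noteq> g \<longrightarrow> f y < f g)"

end

theory Submission
  imports Defs
begin

lemma psi_empty:
  assumes "unique_global_max l f g"
  shows "Psi l f {} = {g}"
  using assms unfolding Psi_def unique_global_max_def agrees_def
  by (force simp: less_le)

lemma epi_single:
  assumes nw: "no_weak_epistasis l f"
  shows "epistatic l f T v \<Longrightarrow> \<exists>t\<in>T. t \<in> IN1 l f v"
proof (induction "card T" arbitrary: T rule: less_induct)
  case less
  have fin: "finite T" using less.prems unfolding epistatic_def
    by (meson finite_atLeastLessThan finite_subset Diff_subset subset_trans)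
  have ne: "T \<noteq> {}" using less.prems unfolding epistatic_def by blast
  show ?case
  proof (cases "2 \<le> card T")
    case True
    with less.prems nw have "\<exists>T'. T' \<noteq> {} \<and> T' \<subset> T \<and> epistatic l f T' v"
      unfolding no_weak_epistasis_def weak_epistatic_def by blast
    then obtain T' where T': "T' \<noteq> {}" "T' \<subset> T" "epistatic l f T' v" by blast
    have "card T' < card T" using T'(2) fin by (simp add: psubset_card_mono)
    from less.hyps[OF this T'(3)] T'(2) show ?thesis by blast
  next
    case False
    have "card T > 0" using fin ne by auto
    with False have "card T = 1" by linarith
    then obtain t where "T = {t}" using card_1_singletonE by blast
    with less.prems show ?thesis unfolding IN1_def by blast
  qed
qed

definition restr :: "(nat \<times> bool) set \<Rightarrow> nat set \<Rightarrow> (nat \<times> bool) set" where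
  "restr R X = {p \<in> R. fst p \<in> X}"

lemma restr_minus: "restr R (X - {x}) = restr R X - ({x} \<times> UNIV)"
  unfolding restr_def by auto

lemma far_lemma:
  assumes ug: "unique_global_max l f g"
    and nw: "no_weak_epistasis l f"
    and R: "is_assignment l R"
    and v: "v < l" "v \<notin> cov R"
    and disj: "IN1 l f v \<inter> cov R = {}"
  shows "finite X \<Longrightarrow> X \<subseteq> cov R \<Longrightarrow> Psi_at l f (restr R X) v = {g v}"
proof (induction "card X" arbitrary: X rule: less_induct)
  case less
  show ?case
  proof (rule ccontr)
    assume bad: "Psi_at l f (restr R X) v \<noteq> {g v}"
    have e0: "Psi_at l f {} v = {g v}"
      unfolding Psi_at_def psi_empty[OF ug] by simp
    have Xne: "X \<noteq> {}"
    proof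
      assume "X = {}"
      then have "restr R X = {}" unfolding restr_def by auto
      with bad e0 show False by simp
    qed
    have covR: "cov R \<subseteq> {0..<l}" using R unfolding is_assignment_def cov_def by auto
    have epi: "epistatic l f X v"
      unfolding epistatic_def
    proof (intro conjI ballI)
      show "v < l" by fact
      show "X \<noteq> {}" by fact
      show "X \<subseteq> {0..<l} - {v}" using less.prems covR v by auto
    next
      fix s assume s: "s \<in> X"
      have "card (X - {s}) < card X" using s less.prems(1)
        by (meson card_Diff1_less)
      then have "Psi_at l f (restr R (X - {s})) v = {g v}"
        using less.hyps less.prems by auto
      then have d: "Psi_at l f (restr R X) v \<noteq> Psi_at l f (restr R X - ({s} \<times> UNIV)) v"
        using bad by (simp add: restr_minus)
      have ia: "is_assignment l (restr R X)" using R unfolding is_assignment_def restr_def by auto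
      have cv: "cov (restr R X) = X" using less.prems(2) unfolding cov_def restr_def by force
      show "\<exists>A. is_assignment l A \<and> cov A = X \<and>
              Psi_at l f A v \<noteq> Psi_at l f (A - ({s} \<times> UNIV)) v"
        using ia cv d by blast
    qed
    from epi_single[OF nw epi] obtain t where "t \<in> X" "t \<in> IN1 l f v" by blast
    with less.prems(2) disj show False by blast
  qed
qed

lemma chroms_finite: "finite (chroms l)"
proof -
  have "inj_on (\<lambda>y. {v. y v}) (chroms l)"
  proof
    fix x y assume "x \<in> chroms l" "y \<in> chroms l" "{v. x v} = {v. y v}"
    then show "x = y" by (auto simp: fun_eq_iff)
  qed
  moreover have "(\<lambda>y. {v. y v}) ` chroms l \<subseteq> Pow {0..<l}"
    unfolding chroms_def by (auto simp: not_le[symmetric])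
  ultimately show ?thesis
    by (meson finite_Pow_iff finite_atLeastLessThan finite_imageD finite_subset)
qed

lemma psi_nonempty:
  assumes R: "is_assignment l R"
  shows "Psi l f R \<noteq> {}"
proof -
  define C where "C = {y \<in> chroms l. agrees y R}"
  define y0 where "y0 = (\<lambda>v. (v, True) \<in> R)"
  have "y0 \<in> C"
    using R unfolding C_def y0_def chroms_def agrees_def is_assignment_def
    by (auto; metis (full_types) not_le)
  moreover have "finite C" unfolding C_def using chroms_finite by auto
  ultimately have "Max (f ` C) \<in> f ` C" "finite (f ` C)" by (auto intro!: Max_in)
  then obtain y where "y \<in> C" "f y = Max (f ` C)" by auto
  with \<open>finite (f ` C)\<close> have "y \<in> C" "\<forall>z\<in>C. f z \<le> f y" by auto
  then have "y \<in> Psi l f R" unfolding C_def Psi_def by auto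
  then show ?thesis by blast
qed

theorem corollary2:
  fixes l :: nat and f :: "(nat \<Rightarrow> bool) \<Rightarrow> real" and g :: "nat \<Rightarrow> bool"
    and S :: "nat set" and R :: "(nat \<times> bool) set"
  assumes "1 \<le> l"
    and "unique_global_max l f g"
    and "no_weak_epistasis l f"
    and "S \<subseteq> {0..<l}"
    and "is_assignment l R"
    and "cov R = {0..<l} - (S \<union> INs l f S \<union> IN2s l f S)"
    and "\<forall>s\<in>S. card (Psi_at l f (gassign (INs l f S - S) g \<union> R) s) = 1"
  shows "\<forall>s\<in>S. \<forall>\<psi>\<in>Psi l f (gassign (INs l f S - S) g \<union> R). \<psi> s = g s"
proof -
  have finR: "finite (cov R)" using assms(6) by auto
  have rR: "restr R (cov R) = R" unfolding restr_def cov_def by auto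
  have key: "Psi_at l f R v = {g v}" if v: "v \<in> S \<union> (INs l f S - S)" for v
  proof -
    have "v < l \<and> v \<notin> cov R \<and> IN1 l f v \<inter> cov R = {}"
    proof (cases "v \<in> S")
      case True
      then show ?thesis using assms(4,6) unfolding INs_def by auto
    next
      case False
      then obtain s0 where s0: "s0 \<in> S" "v \<in> IN1 l f s0" using v unfolding INs_def by auto
      then have "v < l" unfolding IN1_def epistatic_def by auto
      moreover have "IN1 l f v \<subseteq> IN2s l f S"
        using s0 unfolding IN2s_def IN2_def IN1_def by auto
      ultimately show ?thesis using assms(6) s0 unfolding INs_def by auto
    qed
    then show ?thesis
      using far_lemma[OF assms(2,3,5), of v "cov R"] finR rR by auto
  qed
  show ?thesis
  proof (intro ballI)
    fix s \<psi> assume s: "s \<in> S" and psi: "\<psi> \<in> Psi l f (gassign (INs l f S - S) g \<union> R)"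
    obtain \<phi> where phi: "\<phi> \<in> Psi l f R" using psi_nonempty[OF assms(5)] by blast
    have phig: "\<phi> v = g v" if "v \<in> INs l f S - S" for v
      using key[of v] that phi unfolding Psi_at_def by auto
    have phiA: "agrees \<phi> (gassign (INs l f S - S) g \<union> R)"
      using phi phig unfolding Psi_def agrees_def gassign_def by auto
    have "\<psi> \<in> Psi l f R"
      using psi phi phiA unfolding Psi_def agrees_def by (force intro: order_trans)
    then show "\<psi> s = g s" using key[of s] s unfolding Psi_at_def by auto
  qed
qed

end
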